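(* Let $A$ be a finite-dimensional commutative Frobenius algebra over a field with $\dim(A)>1$. Suppose $K$ and $L$ are arrows of $\mathbf{2Cob}$ with $K\neq L$ (as arrows of $\mathbf{2Cob}$) but $F_AK=F_AL$ (as linear maps, in particular with equal domain and codomain). Then there exist integers $n,m\ge 0$, $k_1\ge\dots\ge k_n\ge 0$ and $l_1\ge\dots\ge l_m\ge 0$ with $(k_1,\dots,k_n)\neq(l_1,\dots,l_m)$ such that \[ \bigotimes_{i=1}^n E_{0,k_i,0}=_A\bigotimes_{j=1}^m E_{0,l_j,0} \] (an empty tensor product denoting the empty cobordism $\mathbf{0}\to\mathbf{0}$).
   Context: $\mathbf{2Cob}$ is the category whose objects are $\mathbf{0},\mathbf{1},\mathbf{2},\dots$ ($\mathbf{n}$ being a sequence of $n$ oriented circles) and whose arrows $\mathbf{n}\to\mathbf{m}$ are diffeomorphism classes (rel boundary) of oriented 2-cobordisms with $n$ ingoing and $m$ outgoing boundary circles; it is symmetric monoidal with $\otimes$ given by disjoint union placed side by side. For $m,k,n\ge 0$, $E_{m,k,n}$ denotes the connected 2-cobordism of genus $k$ with $n$ ingoing and $m$ outgoing boundary circles; thus $E_{0,k,0}$ is the closed connected orientable surface of genus $k$ viewed as a cobordism $\mathbf{0}\to\mathbf{0}$. For a commutative Frobenius algebra $(A,\mu,\eta,\delta,\varepsilon)$, $F_A$ denotes the symmetric strong monoidal functor $\mathbf{2Cob}\to\mathbf{Vect}$ with $F_A\mathbf{1}=A$ and $F_A(E_{1,0,2})=\mu$, $F_A(E_{1,0,0})=\eta$,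 $F_A(E_{2,0,1})=\delta$, $F_A(E_{0,0,1})=\varepsilon$. One writes $K=_A L$ if $F_AK=F_AL$. *)

theory Defs
  imports Main "HOL-Library.Multiset"
begin

text \<open>A finite-dimensional algebra A over a field 'k is represented w.r.t. a basis
indexed by the finite type 'b: A = ('b => 'k).  mu a b l is the coefficient of e_l
in mu(e_a (x) e_b); eta l is the coefficient of e_l in eta(1); delta a x y is the
coefficient of e_x (x) e_y in delta(e_a); eps a = eps(e_a).\<close>

definition comm_frobenius ::
  "('b::finite \<Rightarrow> 'b \<Rightarrow> 'b \<Rightarrow> 'k::field) \<Rightarrow> ('b \<Rightarrow> 'k) \<Rightarrow>
   ('b \<Rightarrow> 'b \<Rightarrow> 'b \<Rightarrow> 'k) \<Rightarrow> ('b \<Rightarrow> 'k) \<Rightarrow> bool" where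
  "comm_frobenius mu eta delta eps \<longleftrightarrow>
     (\<forall>a b c l. (\<Sum>i\<in>UNIV. mu a b i * mu i c l) = (\<Sum>i\<in>UNIV. mu b c i * mu a i l)) \<and>
     (\<forall>a l. (\<Sum>i\<in>UNIV. eta i * mu i a l) = (if a = l then 1 else 0)) \<and>
     (\<forall>a l. (\<Sum>i\<in>UNIV. eta i * mu a i l) = (if a = l then 1 else 0)) \<and>
     (\<forall>a b l. mu a b l = mu b a l) \<and>
     (\<forall>a x y z. (\<Sum>i\<in>UNIV. delta a i z * delta i x y) = (\<Sum>i\<in>UNIV. delta a x i * delta i y z)) \<and>
     (\<forall>a l. (\<Sum>i\<in>UNIV. delta a i l * eps i) = (if a = l then 1 else 0)) \<and>
     (\<forall>a l. (\<Sum>i\<in>UNIV. delta a l i * eps i) = (if a = l then 1 else 0)) \<and>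
     (\<forall>a b x y. (\<Sum>i\<in>UNIV. mu a b i * delta i x y) = (\<Sum>c\<in>UNIV. delta b c y * mu a c x)) \<and>
     (\<forall>a b x y. (\<Sum>i\<in>UNIV. mu a b i * delta i x y) = (\<Sum>d\<in>UNIV. delta a x d * mu d b y))"

definition basisv :: "'b \<Rightarrow> 'b \<Rightarrow> 'k::field" where
  "basisv x = (\<lambda>i. if i = x then 1 else 0)"

definition multv :: "('b::finite \<Rightarrow> 'b \<Rightarrow> 'b \<Rightarrow> 'k::field) \<Rightarrow> ('b \<Rightarrow> 'k) \<Rightarrow> ('b \<Rightarrow> 'k) \<Rightarrow> 'b \<Rightarrow> 'k" where
  "multv mu u v = (\<lambda>l. \<Sum>i\<in>UNIV. \<Sum>j\<in>UNIV. u i * v j * mu i j l)"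

fun prodv :: "('b::finite \<Rightarrow> 'b \<Rightarrow> 'b \<Rightarrow> 'k::field) \<Rightarrow> ('b \<Rightarrow> 'k) \<Rightarrow> 'b list \<Rightarrow> 'b \<Rightarrow> 'k" where
  "prodv mu eta [] = eta"
| "prodv mu eta (x # xs) = multv mu (basisv x) (prodv mu eta xs)"

definition handlev :: "('b::finite \<Rightarrow> 'b \<Rightarrow> 'b \<Rightarrow> 'k::field) \<Rightarrow> ('b \<Rightarrow> 'b \<Rightarrow> 'b \<Rightarrow> 'k) \<Rightarrow> ('b \<Rightarrow> 'k) \<Rightarrow> 'b \<Rightarrow> 'k" where
  "handlev mu delta v = (\<lambda>l. \<Sum>i\<in>UNIV. \<Sum>a\<in>UNIV. \<Sum>b\<in>UNIV. v i * delta i a b * mu a b l)"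

text \<open>coefficient of e_y1 (x) ... (x) e_yq in the iterated coproduct delta^(q)(v)
  (q = 0 gives eps)\<close>
fun coprv :: "('b::finite \<Rightarrow> 'b \<Rightarrow> 'b \<Rightarrow> 'k::field) \<Rightarrow> ('b \<Rightarrow> 'k) \<Rightarrow> ('b \<Rightarrow> 'k) \<Rightarrow> 'b list \<Rightarrow> 'k" where
  "coprv delta eps v [] = (\<Sum>i\<in>UNIV. v i * eps i)"
| "coprv delta eps v [y] = v y"
| "coprv delta eps v (y # y' # ys) =
     coprv delta eps (\<lambda>b. \<Sum>i\<in>UNIV. v i * delta i y b) (y' # ys)"

text \<open>matrix coefficient of F_A(E_{q,g,p}) : A^(x)p -> A^(x)q, input basis
  multi-index xs (length p), output multi-index ys (length q)\<close>
definition connv where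
  "connv mu eta delta eps g xs ys =
     coprv delta eps ((handlev mu delta ^^ g) (prodv mu eta xs)) ys"

text \<open>An arrow n -> m of 2Cob (a diffeomorphism class rel boundary of oriented
cobordisms) is determined by the partition of its boundary circles
(Inl i = i-th ingoing circle, Inr j = j-th outgoing circle) into the boundaries
of the components meeting the boundary, the genus of each such component,
and the multiset of genera of its closed components.\<close>

type_synonym cob = "nat \<times> nat \<times> ((nat + nat) set \<times> nat) set \<times> nat multiset"

definition bnd :: "nat \<Rightarrow> nat \<Rightarrow> (nat + nat) set" where
  "bnd n m = Inl ` {..<n} \<union> Inr ` {..<m}"

definition is_arrow :: "cob \<Rightarrow> bool" where
  "is_arrow K = (case K of (n, m, P, C) \<Rightarrow>
     finite P \<and> (\<forall>(B, g) \<in> P. B \<noteq> {}) \<and>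
     (\<forall>(B, g) \<in> P. \<forall>(B', g') \<in> P. (B, g) \<noteq> (B', g') \<longrightarrow> B \<inter> B' = {}) \<and>
     \<Union> (fst ` P) = bnd n m)"

fun cdom :: "cob \<Rightarrow> nat" where "cdom (n, m, P, C) = n"
fun ccod :: "cob \<Rightarrow> nat" where "ccod (n, m, P, C) = m"

text \<open>E_{m,k,n}: connected, genus k, n ingoing and m outgoing circles\<close>
definition E :: "nat \<Rightarrow> nat \<Rightarrow> nat \<Rightarrow> cob" where
  "E m k n = (if n + m = 0 then (0, 0, {}, {#k#}) else (n, m, {(bnd n m, k)}, {#}))"

definition shiftb :: "nat \<Rightarrow> nat \<Rightarrow> nat + nat \<Rightarrow> nat + nat" where
  "shiftb n m = case_sum (\<lambda>i. Inl (i + n)) (\<lambda>j. Inr (j + m))"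

fun ctensor :: "cob \<Rightarrow> cob \<Rightarrow> cob" where
  "ctensor (n1, m1, P1, C1) (n2, m2, P2, C2) =
     (n1 + n2, m1 + m2, P1 \<union> (\<lambda>(B, g). (shiftb n1 m1 ` B, g)) ` P2, C1 + C2)"

definition cunit :: cob where "cunit = (0, 0, {}, {#})"

definition tensor_list :: "cob list \<Rightarrow> cob" where
  "tensor_list Ks = foldr ctensor Ks cunit"

text \<open>matrix coefficient of F_A K, output multi-index ys, input multi-index xs\<close>
fun FA_coeff :: "('b::finite \<Rightarrow> 'b \<Rightarrow> 'b \<Rightarrow> 'k::field) \<Rightarrow> ('b \<Rightarrow> 'k) \<Rightarrow>
    ('b \<Rightarrow> 'b \<Rightarrow> 'b \<Rightarrow> 'k) \<Rightarrow> ('b \<Rightarrow> 'k) \<Rightarrow> cob \<Rightarrow> 'b list \<Rightarrow> 'b list \<Rightarrow> 'k" where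
  "FA_coeff mu eta delta eps (n, m, P, C) ys xs =
     (\<Prod>(B, g) \<in> P. connv mu eta delta eps g
         (map (\<lambda>i. xs ! i) (sorted_list_of_set {i. Inl i \<in> B}))
         (map (\<lambda>j. ys ! j) (sorted_list_of_set {j. Inr j \<in> B}))) *
     (\<Prod>g \<in># C. connv mu eta delta eps g [] [])"

definition FA_eq where
  "FA_eq mu eta delta eps K L \<longleftrightarrow>
     cdom K = cdom L \<and> ccod K = ccod L \<and>
     (\<forall>xs ys. length xs = cdom K \<longrightarrow> length ys = ccod K \<longrightarrow>
        FA_coeff mu eta delta eps K ys xs = FA_coeff mu eta delta eps L ys xs)"

end

theory Submission
  imports Defs "HOL-Library.FuncSet" "HOL-Library.Nat_Bijection"
begin


lemma sum_PiE_list: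
  assumes "distinct L"
  shows "(\<Sum>\<psi>\<in>PiE (set L) (\<lambda>_. UNIV::'b set). F (map \<psi> L)) = (\<Sum>zs\<in>{zs. length zs = length L}. (F zs :: 'k::comm_monoid_add))"
proof (rule sum.reindex_bij_betw)
  show "bij_betw (\<lambda>\<psi>. map \<psi> L) (PiE (set L) (\<lambda>_. UNIV::'b set)) {zs. length zs = length L}"
  proof (rule bij_betwI')
    fix x y assume "x \<in> PiE (set L) (\<lambda>_. UNIV::'b set)" "y \<in> PiE (set L) (\<lambda>_. UNIV::'b set)"
    then show "(map x L = map y L) = (x = y)"
      by (auto intro: PiE_ext)
  next
    fix x show "map x L \<in> {zs. length zs = length L}" by simp
  next
    fix zs :: "'b list" assume zs: "zs \<in> {zs. length zs = length L}"
    define \<psi> where "\<psi> x = (if x \<in> set L then the (map_of (zip L zs) x) else undefined)" for x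
    have "\<psi> \<in> PiE (set L) (\<lambda>_. UNIV)" by (auto simp: \<psi>_def PiE_iff extensional_def)
    moreover have "zs = map \<psi> L"
    proof (rule nth_equalityI)
      show "length zs = length (map \<psi> L)" using zs by simp
      fix k assume "k < length zs"
      then show "zs ! k = map \<psi> L ! k"
        using zs assms by (simp add: \<psi>_def map_of_zip_nth)
    qed
    ultimately show "\<exists>\<psi>\<in>PiE (set L) (\<lambda>_. UNIV). zs = map \<psi> L" by blast
  qed
qed

lemma Ln_Suc: "{zs. length zs = Suc p} = (\<lambda>(x, xs). x # xs) ` (UNIV \<times> {xs. length xs = p})"
  by (auto simp: length_Suc_conv image_def)

lemma sum_Ln_Suc:
  "(\<Sum>zs\<in>{zs. length zs = Suc p}. F zs) = (\<Sum>x\<in>(UNIV::'b::finite set). \<Sum>xs\<in>{xs. length xs = p}. (F (x # xs) :: 'k::comm_monoid_add))"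
proof -
  have inj: "inj_on (\<lambda>(x, xs). x # xs) (UNIV \<times> {xs::'b list. length xs = p})"
    by (auto simp: inj_on_def)
  have "(\<Sum>zs\<in>{zs. length zs = Suc p}. F zs) = (\<Sum>zs\<in>(\<lambda>(x, xs). x # xs) ` (UNIV \<times> {xs::'b list. length xs = p}). F zs)"
    by (simp only: Ln_Suc)
  also have "\<dots> = (\<Sum>(x, xs)\<in>UNIV \<times> {xs::'b list. length xs = p}. F (x # xs))"
    by (subst sum.reindex[OF inj]) (simp add: case_prod_unfold)
  also have "\<dots> = (\<Sum>x\<in>UNIV. \<Sum>xs\<in>{xs. length xs = p}. F (x # xs))"
    by (rule sum.cartesian_product[symmetric])
  finally show ?thesis .
qed

lemma Ln_0: "{zs. length zs = 0} = {[]}" by auto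

lemma sum_Ln_append:
  "(\<Sum>zs\<in>{zs. length zs = p + q}. F zs) = (\<Sum>xs\<in>{xs::'b::finite list. length xs = p}. \<Sum>ys\<in>{ys. length ys = q}. (F (xs @ ys) :: 'k::comm_monoid_add))"
proof (induction p arbitrary: F)
  case 0
  then show ?case by (simp add: Ln_0)
next
  case (Suc p)
  have "(\<Sum>zs\<in>{zs. length zs = Suc p + q}. F zs) = (\<Sum>x\<in>UNIV. \<Sum>zs\<in>{zs. length zs = p + q}. F (x # zs))"
    by (simp add: sum_Ln_Suc)
  also have "\<dots> = (\<Sum>x\<in>UNIV. \<Sum>xs\<in>{xs::'b list. length xs = p}. \<Sum>ys\<in>{ys. length ys = q}. F (x # xs @ ys))"
    using Suc.IH by simp
  also have "\<dots> = (\<Sum>xs\<in>{xs::'b::finite list. length xs = Suc p}. \<Sum>ys\<in>{ys. length ys = q}. (F (xs @ ys)))"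
    by (simp add: sum_Ln_Suc)
  finally show ?case .
qed

lemma sum_PiE_factor:
  fixes S :: "'p \<Rightarrow> 'x set" and G :: "'p \<Rightarrow> ('x \<Rightarrow> 'b::finite) \<Rightarrow> 'k::comm_semiring_1"
  assumes "finite P" "\<forall>p\<in>P. finite (S p)"
    and "\<forall>p\<in>P. \<forall>q\<in>P. p \<noteq> q \<longrightarrow> S p \<inter> S q = {}"
    and "\<forall>p\<in>P. \<forall>\<phi> \<phi>'. (\<forall>x\<in>S p. \<phi> x = \<phi>' x) \<longrightarrow> G p \<phi> = G p \<phi>'"
  shows "(\<Sum>\<phi>\<in>PiE (\<Union>(S ` P)) (\<lambda>_. UNIV). \<Prod>p\<in>P. G p \<phi>) = (\<Prod>p\<in>P. \<Sum>\<psi>\<in>PiE (S p) (\<lambda>_. UNIV). G p \<psi>)"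
  using assms
proof (induction P rule: finite_induct)
  case empty
  then show ?case by simp
next
  case (insert a F)
  define A where "A = S a"
  define U where "U = \<Union>(S ` F)"
  have disj: "A \<inter> U = {}" using insert.prems(2) insert.hyps(2) unfolding A_def U_def by fastforce
  define mg where "mg = (\<lambda>(\<psi>::'x \<Rightarrow> 'b, \<chi>::'x \<Rightarrow> 'b). (\<lambda>x. if x \<in> A then \<psi> x else \<chi> x))"
  have bij: "bij_betw mg (PiE A (\<lambda>_. UNIV) \<times> PiE U (\<lambda>_. UNIV::'b set)) (PiE (A \<union> U) (\<lambda>_. UNIV))"
  proof (rule bij_betwI')
    fix x y assume x: "x \<in> PiE A (\<lambda>_. UNIV::'b set) \<times> PiE U (\<lambda>_. UNIV::'b set)" and y: "y \<in> PiE A (\<lambda>_. UNIV::'b set) \<times> PiE U (\<lambda>_. UNIV::'b set)"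
    obtain x1 x2 where xx: "x = (x1, x2)" by (cases x)
    obtain y1 y2 where yy: "y = (y1, y2)" by (cases y)
    show "(mg x = mg y) = (x = y)"
    proof
      assume eq: "mg x = mg y"
      have "x1 = y1"
      proof (rule PiE_ext)
        show "x1 \<in> PiE A (\<lambda>_. UNIV)" "y1 \<in> PiE A (\<lambda>_. UNIV)" using x y xx yy by auto
        fix i assume "i \<in> A" then show "x1 i = y1 i" using fun_cong[OF eq, of i] xx yy by (simp add: mg_def)
      qed
      moreover have "x2 = y2"
      proof (rule PiE_ext)
        show "x2 \<in> PiE U (\<lambda>_. UNIV::'b set)" "y2 \<in> PiE U (\<lambda>_. UNIV::'b set)" using x y xx yy by auto
        fix i assume "i \<in> U"
        then have "i \<notin> A" using disj by blast
        then show "x2 i = y2 i" using fun_cong[OF eq, of i] xx yy by (simp add: mg_def)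
      qed
      ultimately show "x = y" using xx yy by simp
    qed simp
  next
    fix x assume "x \<in> PiE A (\<lambda>_. UNIV::'b set) \<times> PiE U (\<lambda>_. UNIV::'b set)"
    then show "mg x \<in> PiE (A \<union> U) (\<lambda>_. UNIV)"
      by (auto simp: mg_def PiE_iff extensional_def)
  next
    fix \<phi> assume phi: "\<phi> \<in> PiE (A \<union> U) (\<lambda>_. UNIV::'b set)"
    have "restrict \<phi> A \<in> PiE A (\<lambda>_. UNIV)" "restrict \<phi> U \<in> PiE U (\<lambda>_. UNIV::'b set)" by auto
    moreover have "\<phi> = mg (restrict \<phi> A, restrict \<phi> U)"
      using phi by (auto simp: mg_def PiE_iff extensional_def fun_eq_iff)
    ultimately show "\<exists>x\<in>PiE A (\<lambda>_. UNIV) \<times> PiE U (\<lambda>_. UNIV::'b set). \<phi> = mg x" by blast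
  qed
  have Ga: "G a (mg (\<psi>, \<chi>)) = G a \<psi>" for \<psi> \<chi>
    using insert.prems(3) by (auto simp: mg_def A_def)
  have GF: "(\<Prod>q\<in>F. G q (mg (\<psi>, \<chi>))) = (\<Prod>q\<in>F. G q \<chi>)" for \<psi> \<chi>
  proof (rule prod.cong[OF refl])
    fix q assume q: "q \<in> F"
    have "S q \<inter> A = {}" using insert.prems(2) insert.hyps(2) q unfolding A_def by fastforce
    then have "\<forall>x\<in>S q. mg (\<psi>, \<chi>) x = \<chi> x" by (auto simp: mg_def)
    then show "G q (mg (\<psi>, \<chi>)) = G q \<chi>"
      using insert.prems(3) q by blast
  qed
  have "(\<Sum>\<phi>\<in>PiE (\<Union>(S ` insert a F)) (\<lambda>_. UNIV). \<Prod>p\<in>insert a F. G p \<phi>)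
     = (\<Sum>\<phi>\<in>PiE (A \<union> U) (\<lambda>_. UNIV). G a \<phi> * (\<Prod>p\<in>F. G p \<phi>))"
    using insert.hyps by (simp add: A_def U_def)
  also have "\<dots> = (\<Sum>x\<in>PiE A (\<lambda>_. UNIV) \<times> PiE U (\<lambda>_. UNIV::'b set). G a (mg x) * (\<Prod>p\<in>F. G p (mg x)))"
    by (rule sum.reindex_bij_betw[OF bij, symmetric])
  also have "\<dots> = (\<Sum>x\<in>PiE A (\<lambda>_. UNIV) \<times> PiE U (\<lambda>_. UNIV::'b set). G a (fst x) * (\<Prod>p\<in>F. G p (snd x)))"
    by (rule sum.cong[OF refl]) (auto simp: Ga GF)
  also have "\<dots> = (\<Sum>\<psi>\<in>PiE A (\<lambda>_. UNIV). G a \<psi>) * (\<Sum>\<chi>\<in>PiE U (\<lambda>_. UNIV::'b set). \<Prod>p\<in>F. G p \<chi>)"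
    by (simp add: sum_product sum.cartesian_product case_prod_unfold)
  also have "\<dots> = (\<Prod>p\<in>insert a F. \<Sum>\<psi>\<in>PiE (S p) (\<lambda>_. UNIV). G p \<psi>)"
    using insert by (simp add: A_def U_def)
  finally show ?case .
qed

locale frob =
  fixes mu delta :: "'b::finite \<Rightarrow> 'b \<Rightarrow> 'b \<Rightarrow> 'k::field"
    and eta eps :: "'b \<Rightarrow> 'k"
  assumes cf: "comm_frobenius mu eta delta eps"
begin

lemma ax_assoc: "(\<Sum>i\<in>UNIV. mu a b i * mu i c l) = (\<Sum>i\<in>UNIV. mu b c i * mu a i l)"
  using cf unfolding comm_frobenius_def by (elim conjE allE) assumption
lemma ax_unitl: "(\<Sum>i\<in>UNIV. eta i * mu i a l) = (if a = l then 1 else 0)"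
  using cf unfolding comm_frobenius_def by (elim conjE allE) assumption
lemma ax_unitr: "(\<Sum>i\<in>UNIV. eta i * mu a i l) = (if a = l then 1 else 0)"
  using cf unfolding comm_frobenius_def by (elim conjE allE) assumption
lemma ax_comm: "mu a b l = mu b a l"
  using cf unfolding comm_frobenius_def by (elim conjE allE) assumption
lemma ax_counit2: "(\<Sum>i\<in>UNIV. delta a l i * eps i) = (if a = l then 1 else 0)"
  using cf unfolding comm_frobenius_def by (elim conjE allE) assumption
lemma ax_frob1: "(\<Sum>i\<in>UNIV. mu a b i * delta i x y) = (\<Sum>c\<in>UNIV. delta b c y * mu a c x)"
  using cf unfolding comm_frobenius_def by (elim conjE allE) assumption
lemma ax_frob2: "(\<Sum>i\<in>UNIV. mu a b i * delta i x y) = (\<Sum>d\<in>UNIV. delta a x d * mu d b y)"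
  using cf unfolding comm_frobenius_def by (elim conjE allE) assumption

abbreviation "mv \<equiv> multv mu"
abbreviation "h \<equiv> handlev mu delta"
definition "W g = (h ^^ g) eta"
definition "epsv v = (\<Sum>i\<in>UNIV. v i * eps i)"

lemma mv_unit: "mv u eta = u"
proof
  fix l
  have "mv u eta l = (\<Sum>i\<in>UNIV. u i * (\<Sum>j\<in>UNIV. eta j * mu i j l))"
    by (simp add: multv_def sum_distrib_left mult_ac)
  also have "\<dots> = u l" by (simp add: ax_unitr if_distrib[of "\<lambda>x. u _ * x"] cong: if_cong)
  finally show "mv u eta l = u l" .
qed

lemma mv_comm: "mv u v = mv v u"
  unfolding multv_def by (rule ext, subst sum.swap, simp add: ax_comm mult_ac)

lemma s3: "(\<Sum>x\<in>UNIV. \<Sum>y\<in>UNIV. \<Sum>z\<in>UNIV. f x y z) = (\<Sum>y\<in>UNIV. \<Sum>z\<in>UNIV. \<Sum>x\<in>UNIV. (f x y z :: 'k))"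
proof -
  have "(\<Sum>x\<in>UNIV. \<Sum>y\<in>UNIV. \<Sum>z\<in>UNIV. f x y z) = (\<Sum>y\<in>UNIV. \<Sum>x\<in>UNIV. \<Sum>z\<in>UNIV. f x y z)"
    by (rule sum.swap)
  also have "\<dots> = (\<Sum>y\<in>UNIV. \<Sum>z\<in>UNIV. \<Sum>x\<in>UNIV. f x y z)"
    by (rule sum.cong[OF refl], rule sum.swap)
  finally show ?thesis .
qed

lemma h_eq: "h v l = (\<Sum>i\<in>UNIV. v i * (\<Sum>a\<in>UNIV. \<Sum>b\<in>UNIV. delta i a b * mu a b l))"
  by (simp add: handlev_def sum_distrib_left mult_ac)

lemma h_key: "(\<Sum>i\<in>UNIV. mu p q i * (\<Sum>a\<in>UNIV. \<Sum>b\<in>UNIV. delta i a b * mu a b l))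
   = (\<Sum>i\<in>UNIV. (\<Sum>b\<in>UNIV. \<Sum>c\<in>UNIV. delta q c b * mu c b i) * mu p i l)"
proof -
  have "(\<Sum>i\<in>UNIV. mu p q i * (\<Sum>a\<in>UNIV. \<Sum>b\<in>UNIV. delta i a b * mu a b l))
     = (\<Sum>i\<in>UNIV. \<Sum>a\<in>UNIV. \<Sum>b\<in>UNIV. mu p q i * delta i a b * mu a b l)"
    by (simp add: sum_distrib_left mult_ac)
  also have "\<dots> = (\<Sum>a\<in>UNIV. \<Sum>b\<in>UNIV. \<Sum>i\<in>UNIV. mu p q i * delta i a b * mu a b l)"
    by (rule s3)
  also have "\<dots> = (\<Sum>a\<in>UNIV. \<Sum>b\<in>UNIV. (\<Sum>i\<in>UNIV. mu p q i * delta i a b) * mu a b l)"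
    by (simp add: sum_distrib_right)
  also have "\<dots> = (\<Sum>a\<in>UNIV. \<Sum>b\<in>UNIV. (\<Sum>c\<in>UNIV. delta q c b * mu p c a) * mu a b l)"
    by (simp add: ax_frob1)
  also have "\<dots> = (\<Sum>a\<in>UNIV. \<Sum>b\<in>UNIV. \<Sum>c\<in>UNIV. delta q c b * (mu p c a * mu a b l))"
    by (simp only: sum_distrib_right mult.assoc)
  also have "\<dots> = (\<Sum>b\<in>UNIV. \<Sum>c\<in>UNIV. \<Sum>a\<in>UNIV. delta q c b * (mu p c a * mu a b l))"
    by (rule s3)
  also have "\<dots> = (\<Sum>b\<in>UNIV. \<Sum>c\<in>UNIV. delta q c b * (\<Sum>a\<in>UNIV. mu p c a * mu a b l))"
    by (simp add: sum_distrib_left)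
  also have "\<dots> = (\<Sum>b\<in>UNIV. \<Sum>c\<in>UNIV. delta q c b * (\<Sum>i\<in>UNIV. mu c b i * mu p i l))"
    by (simp add: ax_assoc)
  also have "\<dots> = (\<Sum>b\<in>UNIV. \<Sum>c\<in>UNIV. \<Sum>i\<in>UNIV. delta q c b * mu c b i * mu p i l)"
    by (simp add: sum_distrib_left mult_ac)
  also have "\<dots> = (\<Sum>i\<in>UNIV. \<Sum>b\<in>UNIV. \<Sum>c\<in>UNIV. delta q c b * mu c b i * mu p i l)"
    by (rule s3[symmetric])
  also have "\<dots> = (\<Sum>i\<in>UNIV. (\<Sum>b\<in>UNIV. \<Sum>c\<in>UNIV. delta q c b * mu c b i) * mu p i l)"
    by (simp add: sum_distrib_right)
  finally show ?thesis .
qed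

lemma h_mult: "h (mv u w) = mv u (h w)"
proof
  fix l
  define Hl where "Hl i = (\<Sum>a\<in>UNIV. \<Sum>b\<in>UNIV. delta i a b * mu a b l)" for i
  define G where "G q i = (\<Sum>b\<in>UNIV. \<Sum>c\<in>UNIV. delta q c b * mu c b i)" for q i
  have hk: "(\<Sum>i\<in>UNIV. mu p q i * Hl i) = (\<Sum>i\<in>UNIV. G q i * mu p i l)" for p q
    unfolding Hl_def G_def by (rule h_key)
  have hw: "h w i = (\<Sum>q\<in>UNIV. w q * G q i)" for i
  proof -
    have "G q i = (\<Sum>a\<in>UNIV. \<Sum>b\<in>UNIV. delta q a b * mu a b i)" for q
      unfolding G_def by (rule sum.swap)
    then show ?thesis by (simp add: h_eq)
  qed
  have "h (mv u w) l = (\<Sum>i\<in>UNIV. (\<Sum>p\<in>UNIV. \<Sum>q\<in>UNIV. u p * w q * mu p q i) * Hl i)"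
    by (simp add: h_eq multv_def Hl_def)
  also have "\<dots> = (\<Sum>i\<in>UNIV. \<Sum>p\<in>UNIV. \<Sum>q\<in>UNIV. u p * w q * (mu p q i * Hl i))"
    by (simp only: sum_distrib_right mult.assoc)
  also have "\<dots> = (\<Sum>p\<in>UNIV. \<Sum>q\<in>UNIV. \<Sum>i\<in>UNIV. u p * w q * (mu p q i * Hl i))"
    by (rule s3)
  also have "\<dots> = (\<Sum>p\<in>UNIV. \<Sum>q\<in>UNIV. u p * w q * (\<Sum>i\<in>UNIV. mu p q i * Hl i))"
    by (simp only: sum_distrib_left)
  also have "\<dots> = (\<Sum>p\<in>UNIV. \<Sum>q\<in>UNIV. u p * w q * (\<Sum>i\<in>UNIV. G q i * mu p i l))"
    by (simp only: hk)
  also have "\<dots> = (\<Sum>p\<in>UNIV. \<Sum>q\<in>UNIV. \<Sum>i\<in>UNIV. u p * (w q * G q i) * mu p i l)"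
    by (simp only: sum_distrib_left mult.assoc)
  also have "\<dots> = (\<Sum>p\<in>UNIV. \<Sum>i\<in>UNIV. \<Sum>q\<in>UNIV. u p * (w q * G q i) * mu p i l)"
    by (rule sum.cong[OF refl], rule sum.swap)
  also have "\<dots> = (\<Sum>p\<in>UNIV. \<Sum>i\<in>UNIV. u p * (\<Sum>q\<in>UNIV. w q * G q i) * mu p i l)"
    by (simp only: sum_distrib_left sum_distrib_right)
  also have "\<dots> = mv u (h w) l"
    by (simp add: multv_def hw)
  finally show "h (mv u w) l = mv u (h w) l" .
qed

lemma hpow: "(h ^^ g) u = mv u (W g)"
proof (induction g)
  case 0
  then show ?case by (simp add: W_def mv_unit)
next
  case (Suc g)
  then show ?case by (simp add: W_def h_mult)
qed

lemma W_add: "mv (W a) (W b) = W (a + b)"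
proof -
  have "mv (W a) (W b) = (h ^^ b) (W a)" by (simp add: hpow)
  also have "\<dots> = W (b + a)" by (simp add: W_def funpow_add)
  finally show ?thesis by (simp add: add.commute)
qed

lemma W_0: "W 0 = eta" by (simp add: W_def)

lemma mv_assocW: "mv (mv v (W r)) (W b) = mv v (W (b + r))"
  by (metis (no_types) hpow funpow_add comp_apply)

lemma sum_if_const: "(\<Sum>j\<in>S. if P then f j else 0) = (if P then (\<Sum>j\<in>S. f j) else 0)"
  by (cases P) auto

lemma mv_basis: "mv (basisv x) u l = (\<Sum>j\<in>UNIV. u j * mu x j l)"
  by (simp add: multv_def basisv_def if_distrib[of "\<lambda>x. x * _"] sum_if_const cong: if_cong)

lemma mv_lin1: "(\<Sum>x\<in>UNIV. c x * mv (basisv x) u l) = mv c u l"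
  unfolding mv_basis by (simp add: multv_def sum_distrib_left mult_ac)

lemma mv_lin2: "(\<Sum>s\<in>S. mv (basisv x) (f s) l * c s) = mv (basisv x) (\<lambda>l'. \<Sum>s\<in>S. f s l' * c s) l"
proof -
  have "(\<Sum>s\<in>S. mv (basisv x) (f s) l * c s) = (\<Sum>s\<in>S. \<Sum>j\<in>UNIV. f s j * c s * mu x j l)"
    unfolding mv_basis by (simp add: sum_distrib_right sum_distrib_left mult_ac)
  also have "\<dots> = (\<Sum>j\<in>UNIV. \<Sum>s\<in>S. f s j * c s * mu x j l)"
    by (rule sum.swap)
  also have "\<dots> = mv (basisv x) (\<lambda>l'. \<Sum>s\<in>S. f s l' * c s) l"
    unfolding mv_basis by (simp add: sum_distrib_right)
  finally show ?thesis .
qed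

lemma epsv_mvb: "epsv (mv (basisv c) z) = (\<Sum>j\<in>UNIV. z j * (\<Sum>l\<in>UNIV. mu c j l * eps l))"
proof -
  have "epsv (mv (basisv c) z) = (\<Sum>l\<in>UNIV. \<Sum>j\<in>UNIV. z j * (mu c j l * eps l))"
    unfolding epsv_def mv_basis by (simp add: sum_distrib_right sum_distrib_left mult_ac)
  also have "\<dots> = (\<Sum>j\<in>UNIV. \<Sum>l\<in>UNIV. z j * (mu c j l * eps l))"
    by (rule sum.swap)
  also have "\<dots> = (\<Sum>j\<in>UNIV. z j * (\<Sum>l\<in>UNIV. mu c j l * eps l))"
    by (simp add: sum_distrib_left)
  finally show ?thesis .
qed

lemma epsv_lin: "(\<Sum>y\<in>UNIV. v y * epsv (mv (basisv y) z)) = epsv (mv v z)"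
proof -
  have "epsv (mv v z) = (\<Sum>l\<in>UNIV. (\<Sum>y\<in>UNIV. v y * mv (basisv y) z l) * eps l)"
    unfolding epsv_def mv_lin1 ..
  also have "\<dots> = (\<Sum>l\<in>UNIV. \<Sum>y\<in>UNIV. v y * (mv (basisv y) z l * eps l))"
    by (simp only: sum_distrib_right mult.assoc)
  also have "\<dots> = (\<Sum>y\<in>UNIV. \<Sum>l\<in>UNIV. v y * (mv (basisv y) z l * eps l))"
    by (rule sum.swap)
  also have "\<dots> = (\<Sum>y\<in>UNIV. v y * epsv (mv (basisv y) z))"
    unfolding epsv_def by (simp only: sum_distrib_left)
  finally show ?thesis ..
qed

lemma inner9: "(\<Sum>c\<in>UNIV. delta i y c * (\<Sum>l\<in>UNIV. mu c j l * eps l)) = mu i j y"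
proof -
  have "(\<Sum>c\<in>UNIV. delta i y c * (\<Sum>l\<in>UNIV. mu c j l * eps l))
      = (\<Sum>c\<in>UNIV. \<Sum>l\<in>UNIV. delta i y c * mu c j l * eps l)"
    by (simp add: sum_distrib_left mult_ac)
  also have "\<dots> = (\<Sum>l\<in>UNIV. \<Sum>c\<in>UNIV. delta i y c * mu c j l * eps l)"
    by (rule sum.swap)
  also have "\<dots> = (\<Sum>l\<in>UNIV. (\<Sum>c\<in>UNIV. delta i y c * mu c j l) * eps l)"
    by (simp add: sum_distrib_right)
  also have "\<dots> = (\<Sum>l\<in>UNIV. (\<Sum>k\<in>UNIV. mu i j k * delta k y l) * eps l)"
    by (simp add: ax_frob2)
  also have "\<dots> = (\<Sum>l\<in>UNIV. \<Sum>k\<in>UNIV. mu i j k * (delta k y l * eps l))"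
    by (simp only: sum_distrib_right mult.assoc)
  also have "\<dots> = (\<Sum>k\<in>UNIV. \<Sum>l\<in>UNIV. mu i j k * (delta k y l * eps l))"
    by (rule sum.swap)
  also have "\<dots> = (\<Sum>k\<in>UNIV. mu i j k * (\<Sum>l\<in>UNIV. delta k y l * eps l))"
    by (simp add: sum_distrib_left)
  also have "\<dots> = mu i j y"
    by (simp add: ax_counit2 if_distrib[of "\<lambda>x. mu _ _ _ * x"] cong: if_cong)
  finally show ?thesis .
qed

lemma key9: "(\<Sum>c\<in>UNIV. (\<Sum>i\<in>UNIV. v i * delta i y c) * epsv (mv (basisv c) z)) = mv v z y"
proof -
  have "(\<Sum>c\<in>UNIV. (\<Sum>i\<in>UNIV. v i * delta i y c) * epsv (mv (basisv c) z))
     = (\<Sum>c\<in>UNIV. \<Sum>i\<in>UNIV. \<Sum>j\<in>UNIV. v i * z j * (delta i y c * (\<Sum>l\<in>UNIV. mu c j l * eps l)))"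
  proof (rule sum.cong[OF refl])
    fix c
    define M where "M j = (\<Sum>l\<in>UNIV. mu c j l * eps l)" for j
    have "(\<Sum>i\<in>UNIV. v i * delta i y c) * epsv (mv (basisv c) z)
       = (\<Sum>i\<in>UNIV. v i * delta i y c) * (\<Sum>j\<in>UNIV. z j * M j)"
      by (simp add: epsv_mvb M_def)
    also have "\<dots> = (\<Sum>i\<in>UNIV. \<Sum>j\<in>UNIV. v i * z j * (delta i y c * M j))"
      by (simp add: sum_distrib_left sum_distrib_right mult_ac)
    finally show "(\<Sum>i\<in>UNIV. v i * delta i y c) * epsv (mv (basisv c) z)
       = (\<Sum>i\<in>UNIV. \<Sum>j\<in>UNIV. v i * z j * (delta i y c * (\<Sum>l\<in>UNIV. mu c j l * eps l)))"
      by (simp add: M_def)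
  qed
  also have "\<dots> = (\<Sum>i\<in>UNIV. \<Sum>j\<in>UNIV. \<Sum>c\<in>UNIV. v i * z j * (delta i y c * (\<Sum>l\<in>UNIV. mu c j l * eps l)))"
    by (rule s3)
  also have "\<dots> = (\<Sum>i\<in>UNIV. \<Sum>j\<in>UNIV. v i * z j * (\<Sum>c\<in>UNIV. delta i y c * (\<Sum>l\<in>UNIV. mu c j l * eps l)))"
    by (simp only: sum_distrib_left)
  also have "\<dots> = mv v z y"
    by (simp add: inner9 multv_def)
  finally show ?thesis .
qed

lemma prod_contr:
  "(\<Sum>xs\<in>{xs. length xs = length I}. prodv mu eta xs l * prod_list (map2 (\<lambda>i x. W (\<alpha> i) x) I xs))
     = W (sum_list (map \<alpha> I)) l"
proof (induction I arbitrary: l)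
  case Nil
  then show ?case by (simp add: Ln_0 W_0)
next
  case (Cons i I)
  have "(\<Sum>xs\<in>{xs. length xs = length (i # I)}. prodv mu eta xs l * prod_list (map2 (\<lambda>i x. W (\<alpha> i) x) (i # I) xs))
     = (\<Sum>x\<in>UNIV. \<Sum>xs\<in>{xs. length xs = length I}. mv (basisv x) (prodv mu eta xs) l * (W (\<alpha> i) x * prod_list (map2 (\<lambda>i x. W (\<alpha> i) x) I xs)))"
    by (simp add: sum_Ln_Suc)
  also have "\<dots> = (\<Sum>x\<in>UNIV. W (\<alpha> i) x * (\<Sum>xs\<in>{xs. length xs = length I}. mv (basisv x) (prodv mu eta xs) l * prod_list (map2 (\<lambda>i x. W (\<alpha> i) x) I xs)))"
    by (simp add: sum_distrib_left mult_ac)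
  also have "\<dots> = (\<Sum>x\<in>UNIV. W (\<alpha> i) x * mv (basisv x) (W (sum_list (map \<alpha> I))) l)"
    by (simp add: mv_lin2 Cons.IH)
  also have "\<dots> = W (sum_list (map \<alpha> (i # I))) l"
    by (simp add: mv_lin1 W_add)
  finally show ?case .
qed

definition "Wc b y = epsv (mv (basisv y) (W b))"

lemma copr_contr:
  "(\<Sum>ys\<in>{ys. length ys = length J}. coprv delta eps v ys * prod_list (map2 (\<lambda>j y. Wc (\<beta> j) y) J ys))
     = epsv (mv v (W (sum_list (map \<beta> J))))"
proof (induction J arbitrary: v)
  case Nil
  then show ?case by (simp add: Ln_0 W_0 mv_unit epsv_def)
next
  case (Cons j J)
  show ?case
  proof (cases J)
    case Nil
    then show ?thesis by (simp add: sum_Ln_Suc Ln_0 Wc_def epsv_lin)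
  next
    case (Cons j' J')
    define vy where "vy y = (\<lambda>b. \<Sum>i\<in>UNIV. v i * delta i y b)" for y
    have cp: "coprv delta eps v (y # zs) = coprv delta eps (vy y) zs" if "length zs = length J" for y zs
      using that Cons by (cases zs) (auto simp: vy_def)
    have "(\<Sum>ys\<in>{ys. length ys = length (j # J)}. coprv delta eps v ys * prod_list (map2 (\<lambda>j y. Wc (\<beta> j) y) (j # J) ys))
       = (\<Sum>y\<in>UNIV. \<Sum>zs\<in>{zs. length zs = length J}. coprv delta eps v (y # zs) * (Wc (\<beta> j) y * prod_list (map2 (\<lambda>j y. Wc (\<beta> j) y) J zs)))"
      by (simp add: sum_Ln_Suc)
    also have "\<dots> = (\<Sum>y\<in>UNIV. Wc (\<beta> j) y * (\<Sum>zs\<in>{zs. length zs = length J}. coprv delta eps (vy y) zs * prod_list (map2 (\<lambda>j y. Wc (\<beta> j) y) J zs)))"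
      apply (rule sum.cong[OF refl])
      apply (simp add: sum_distrib_left)
      apply (rule sum.cong[OF refl])
      apply (simp add: cp mult_ac)
      done
    also have "\<dots> = (\<Sum>y\<in>UNIV. Wc (\<beta> j) y * epsv (mv (vy y) (W (sum_list (map \<beta> J)))))"
      by (simp add: Cons.IH)
    also have "\<dots> = (\<Sum>y\<in>UNIV. mv v (W (sum_list (map \<beta> J))) y * epsv (mv (basisv y) (W (\<beta> j))))"
    proof (rule sum.cong[OF refl])
      fix y
      have "epsv (mv (vy y) (W (sum_list (map \<beta> J)))) = (\<Sum>c\<in>UNIV. vy y c * epsv (mv (basisv c) (W (sum_list (map \<beta> J)))))"
        by (rule epsv_lin[symmetric])
      also have "\<dots> = mv v (W (sum_list (map \<beta> J))) y"
        unfolding vy_def by (rule key9)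
      finally show "Wc (\<beta> j) y * epsv (mv (vy y) (W (sum_list (map \<beta> J)))) = mv v (W (sum_list (map \<beta> J))) y * epsv (mv (basisv y) (W (\<beta> j)))"
        by (simp add: Wc_def mult.commute)
    qed
    also have "\<dots> = epsv (mv v (W (sum_list (map \<beta> (j # J)))))"
      by (simp add: epsv_lin mv_assocW)
    finally show ?thesis .
  qed
qed

lemma block_contr:
  "(\<Sum>xs\<in>{xs. length xs = length I}. \<Sum>ys\<in>{ys. length ys = length J}.
      connv mu eta delta eps g xs ys * prod_list (map2 (\<lambda>i x. W (\<alpha> i) x) I xs) * prod_list (map2 (\<lambda>j y. Wc (\<beta> j) y) J ys))
   = epsv (W (g + sum_list (map \<alpha> I) + sum_list (map \<beta> J)))"
proof -
  have "(\<Sum>xs\<in>{xs. length xs = length I}. \<Sum>ys\<in>{ys. length ys = length J}.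
      connv mu eta delta eps g xs ys * prod_list (map2 (\<lambda>i x. W (\<alpha> i) x) I xs) * prod_list (map2 (\<lambda>j y. Wc (\<beta> j) y) J ys))
    = (\<Sum>xs\<in>{xs. length xs = length I}. prod_list (map2 (\<lambda>i x. W (\<alpha> i) x) I xs) *
        epsv (mv (mv (prodv mu eta xs) (W g)) (W (sum_list (map \<beta> J)))))"
  proof (rule sum.cong[OF refl])
    fix xs
    define Px where "Px = prod_list (map2 (\<lambda>i x. W (\<alpha> i) x) I xs)"
    have "(\<Sum>ys\<in>{ys. length ys = length J}. connv mu eta delta eps g xs ys * Px * prod_list (map2 (\<lambda>j y. Wc (\<beta> j) y) J ys))
       = Px * (\<Sum>ys\<in>{ys. length ys = length J}. coprv delta eps (mv (prodv mu eta xs) (W g)) ys * prod_list (map2 (\<lambda>j y. Wc (\<beta> j) y) J ys))"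
      by (simp add: connv_def hpow sum_distrib_left mult_ac)
    also have "\<dots> = Px * epsv (mv (mv (prodv mu eta xs) (W g)) (W (sum_list (map \<beta> J))))"
      by (simp only: copr_contr)
    finally show "(\<Sum>ys\<in>{ys. length ys = length J}. connv mu eta delta eps g xs ys * prod_list (map2 (\<lambda>i x. W (\<alpha> i) x) I xs) * prod_list (map2 (\<lambda>j y. Wc (\<beta> j) y) J ys))
       = prod_list (map2 (\<lambda>i x. W (\<alpha> i) x) I xs) * epsv (mv (mv (prodv mu eta xs) (W g)) (W (sum_list (map \<beta> J))))"
      by (simp add: Px_def)
  qed
  also have "\<dots> = (\<Sum>xs\<in>{xs. length xs = length I}. prod_list (map2 (\<lambda>i x. W (\<alpha> i) x) I xs) *
        epsv (mv (prodv mu eta xs) (W (sum_list (map \<beta> J) + g))))"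
    by (simp add: mv_assocW)
  also have "\<dots> = epsv (mv (W (sum_list (map \<alpha> I))) (W (sum_list (map \<beta> J) + g)))"
  proof -
    define Z where "Z = W (sum_list (map \<beta> J) + g)"
    define P where "P xs = prod_list (map2 (\<lambda>i x. W (\<alpha> i) x) I xs)" for xs
    define E where "E l = epsv (mv (basisv l) Z)" for l
    have "(\<Sum>xs\<in>{xs. length xs = length I}. P xs * epsv (mv (prodv mu eta xs) Z))
       = (\<Sum>xs\<in>{xs. length xs = length I}. \<Sum>l\<in>UNIV. prodv mu eta xs l * P xs * E l)"
    proof (rule sum.cong[OF refl])
      fix xs
      have "epsv (mv (prodv mu eta xs) Z) = (\<Sum>l\<in>UNIV. prodv mu eta xs l * E l)"
        unfolding E_def by (simp only: epsv_lin)
      then show "P xs * epsv (mv (prodv mu eta xs) Z) = (\<Sum>l\<in>UNIV. prodv mu eta xs l * P xs * E l)"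
        by (simp add: sum_distrib_left mult_ac)
    qed
    also have "\<dots> = (\<Sum>l\<in>UNIV. \<Sum>xs\<in>{xs. length xs = length I}. prodv mu eta xs l * P xs * E l)"
      by (rule sum.swap)
    also have "\<dots> = (\<Sum>l\<in>UNIV. (\<Sum>xs\<in>{xs. length xs = length I}. prodv mu eta xs l * P xs) * E l)"
      by (simp add: sum_distrib_right)
    also have "\<dots> = epsv (mv (W (sum_list (map \<alpha> I))) Z)"
      by (simp add: P_def prod_contr E_def epsv_lin)
    finally show ?thesis by (simp add: Z_def P_def)
  qed
  also have "\<dots> = epsv (W (g + sum_list (map \<alpha> I) + sum_list (map \<beta> J)))"
    by (simp add: W_add add_ac)
  finally show ?thesis .
qed

end


lemma filter_all: "(\<forall>x\<in>#M. P x) \<Longrightarrow> filter_mset P M = M"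
  by (induction M) auto

lemma filter_none: "(\<forall>x\<in>#M. \<not> P x) \<Longrightarrow> filter_mset P M = {#}"
  by (induction M) auto

lemma sum_t_enc: "finite B \<Longrightarrow> (\<Sum>x\<in>B. N * 2 ^ sum_encode x) = N * set_encode (sum_encode ` B)"
proof -
  assume "finite B"
  have "(\<Sum>x\<in>B. N * 2 ^ sum_encode x) = N * (\<Sum>x\<in>B. 2 ^ sum_encode x)" by (simp add: sum_distrib_left)
  also have "(\<Sum>x\<in>B. (2::nat) ^ sum_encode x) = (\<Sum>k\<in>sum_encode ` B. 2 ^ k)"
    by (simp add: sum.reindex inj_sum_encode)
  finally show ?thesis by (simp add: set_encode_def)
qed

lemma set_encode_pos: "finite A \<Longrightarrow> A \<noteq> {} \<Longrightarrow> set_encode A \<ge> 1"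
proof -
  assume "finite A" "A \<noteq> {}"
  then obtain k where "k \<in> A" by blast
  then have "(2::nat) ^ k \<le> (\<Sum>k\<in>A. 2 ^ k)" using \<open>finite A\<close> by (intro member_le_sum) auto
  moreover have "(1::nat) \<le> 2 ^ k" by simp
  ultimately show ?thesis unfolding set_encode_def by linarith
qed

lemma comb_key:
  fixes P P' :: "((nat + nat) set \<times> nat) set" and C C' :: "nat multiset"
  assumes Npos: "N > 0" and fP: "finite P" and fP': "finite P'"
    and ne: "\<forall>p\<in>P \<union> P'. fst p \<noteq> {} \<and> finite (fst p)"
    and bs: "\<forall>p\<in>P \<union> P'. snd p < N"
    and bc: "\<forall>g\<in>#C + C'. g < N"
    and eq: "image_mset (\<lambda>p. snd p + (\<Sum>x\<in>fst p. N * 2 ^ sum_encode x)) (mset_set P) + C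
           = image_mset (\<lambda>p. snd p + (\<Sum>x\<in>fst p. N * 2 ^ sum_encode x)) (mset_set P') + C'"
  shows "P = P' \<and> C = C'"
proof -
  define v where "v p = snd p + (\<Sum>x\<in>fst p. N * 2 ^ sum_encode x)" for p :: "(nat + nat) set \<times> nat"
  define e where "e B = set_encode (sum_encode ` B)" for B :: "(nat + nat) set"
  have ve: "v p = snd p + N * e (fst p)" if "p \<in> P \<union> P'" for p
    using ne that by (simp add: v_def e_def sum_t_enc)
  have vge: "v p \<ge> N" if "p \<in> P \<union> P'" for p
  proof -
    have "e (fst p) \<ge> 1" using ne that unfolding e_def by (intro set_encode_pos) auto
    then show ?thesis using ve[OF that] by (metis le_add2 mult.right_neutral mult_le_mono2 order_trans)
  qed
  have inj: "inj_on v (P \<union> P')"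
  proof (rule inj_onI)
    fix p q assume p: "p \<in> P \<union> P'" and q: "q \<in> P \<union> P'" and eqv: "v p = v q"
    have "v p mod N = snd p" using ve[OF p] bs p by simp
    moreover have "v q mod N = snd q" using ve[OF q] bs q by simp
    ultimately have s: "snd p = snd q" using eqv by simp
    have "v p div N = e (fst p)" using ve[OF p] bs p Npos by simp
    moreover have "v q div N = e (fst q)" using ve[OF q] bs q Npos by simp
    ultimately have "e (fst p) = e (fst q)" using eqv by simp
    then have "sum_encode ` fst p = sum_encode ` fst q"
      unfolding e_def using ne p q by (simp add: set_encode_eq)
    then have "fst p = fst q" by (simp add: inj_image_eq_iff inj_sum_encode)
    then show "p = q" using s by (simp add: prod_eq_iff)
  qed
  have filt: "filter_mset (\<lambda>x. N \<le> x) (image_mset v (mset_set Q) + D) = image_mset v (mset_set Q)"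
    if "Q \<subseteq> P \<union> P'" "finite Q" "\<forall>g\<in>#D. g < N" for Q D
  proof -
    have "filter_mset (\<lambda>x. N \<le> x) (image_mset v (mset_set Q)) = image_mset v (mset_set Q)"
      using that vge by (intro filter_all) auto
    moreover have "filter_mset (\<lambda>x. N \<le> x) D = {#}"
      using that by (intro filter_none) auto
    ultimately show ?thesis by simp
  qed
  have eq2: "image_mset v (mset_set P) + C = image_mset v (mset_set P') + C'"
    using eq by (simp only: v_def[abs_def])
  have f1: "filter_mset (\<lambda>x. N \<le> x) (image_mset v (mset_set P) + C) = image_mset v (mset_set P)"
    by (rule filt) (use fP bc in auto)
  have f2: "filter_mset (\<lambda>x. N \<le> x) (image_mset v (mset_set P') + C') = image_mset v (mset_set P')"
    by (rule filt) (use fP' bc in auto)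
  have im: "image_mset v (mset_set P) = image_mset v (mset_set P')"
    using f1 f2 eq2 by metis
  have bk: "image_mset (inv_into (P \<union> P') v) (image_mset v (mset_set Q)) = mset_set Q"
    if "Q \<subseteq> P \<union> P'" "finite Q" for Q
  proof -
    have "image_mset (inv_into (P \<union> P') v) (image_mset v (mset_set Q)) = image_mset (\<lambda>x. x) (mset_set Q)"
      unfolding multiset.map_comp
    proof (rule image_mset_cong)
      fix x assume "x \<in># mset_set Q"
      then have "x \<in> P \<union> P'" using that by auto
      then show "(inv_into (P \<union> P') v \<circ> v) x = x" using inj by (simp add: inv_into_f_f)
    qed
    then show ?thesis by simp
  qed
  have b1: "image_mset (inv_into (P \<union> P') v) (image_mset v (mset_set P)) = mset_set P"
    by (rule bk) (use fP in auto)
  have b2: "image_mset (inv_into (P \<union> P') v) (image_mset v (mset_set P')) = mset_set P'"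
    by (rule bk) (use fP' in auto)
  have "mset_set P = mset_set P'" using b1 b2 im by metis
  then have "set_mset (mset_set P) = set_mset (mset_set P')" by simp
  then have PP: "P = P'" using fP fP' by simp
  have "C = C'" using eq2 unfolding PP by (rule add_left_imp_eq)
  with PP show ?thesis by simp
qed



lemma map2_same: "map2 f xs (map g xs) = map (\<lambda>x. f x (g x)) xs"
  by (induction xs) auto

lemma map2_map1: "map2 f (map g I) xs = map2 (\<lambda>i x. f (g i) x) I xs"
  by (induction I arbitrary: xs) (auto split: list.splits simp: zip_Cons1)

lemma finite_Inl_vim: "finite B \<Longrightarrow> finite {i. Inl i \<in> B}"
  using finite_vimageI[of B Inl] by (simp add: vimage_def)
lemma finite_Inr_vim: "finite B \<Longrightarrow> finite {i. Inr i \<in> B}"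
  using finite_vimageI[of B Inr] by (simp add: vimage_def)

lemma B_split: "B = Inl ` {i. Inl i \<in> B} \<union> Inr ` {j. Inr j \<in> B}"
  by (auto, case_tac x, auto)

lemma sum_case_split: "finite B \<Longrightarrow> (\<Sum>x\<in>B. case_sum \<alpha> \<beta> x) = (\<Sum>i\<in>{i. Inl i \<in> B}. \<alpha> i) + (\<Sum>j\<in>{j. Inr j \<in> B}. (\<beta> j :: nat))"
proof -
  assume fin: "finite B"
  have "(\<Sum>x\<in>B. case_sum \<alpha> \<beta> x) = (\<Sum>x\<in>Inl ` {i. Inl i \<in> B} \<union> Inr ` {j. Inr j \<in> B}. case_sum \<alpha> \<beta> x)"
    using B_split[of B] by simp
  also have "\<dots> = (\<Sum>x\<in>Inl ` {i. Inl i \<in> B}. case_sum \<alpha> \<beta> x) + (\<Sum>x\<in>Inr ` {j. Inr j \<in> B}. case_sum \<alpha> \<beta> x)"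
    by (rule sum.union_disjoint) (auto simp: finite_Inl_vim finite_Inr_vim fin)
  also have "\<dots> = (\<Sum>i\<in>{i. Inl i \<in> B}. \<alpha> i) + (\<Sum>j\<in>{j. Inr j \<in> B}. \<beta> j)"
    by (simp add: sum.reindex)
  finally show ?thesis .
qed

context frob
begin

definition "cval g = epsv (W g)"

lemma connv_nil: "connv mu eta delta eps g [] [] = cval g"
  by (simp add: connv_def cval_def epsv_def W_def)

definition "Ufun \<alpha> \<beta> x = (case x of Inl i \<Rightarrow> W (\<alpha> i) | Inr j \<Rightarrow> Wc (\<beta> j))"

lemma block_sum:
  assumes fin: "finite B"
  shows "(\<Sum>\<psi>\<in>PiE B (\<lambda>_. UNIV). connv mu eta delta eps g (map (\<lambda>i. \<psi> (Inl i)) (sorted_list_of_set {i. Inl i \<in> B}))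
            (map (\<lambda>j. \<psi> (Inr j)) (sorted_list_of_set {j. Inr j \<in> B})) * (\<Prod>x\<in>B. Ufun \<alpha> \<beta> x (\<psi> x)))
       = cval (g + (\<Sum>x\<in>B. case_sum \<alpha> \<beta> x))"
proof -
  define I where "I = sorted_list_of_set {i. Inl i \<in> B}"
  define J where "J = sorted_list_of_set {j. Inr j \<in> B}"
  define LB where "LB = map Inl I @ map Inr J"
  have dI: "distinct I" and sI: "set I = {i. Inl i \<in> B}" using fin by (auto simp: I_def finite_Inl_vim)
  have dJ: "distinct J" and sJ: "set J = {j. Inr j \<in> B}" using fin by (auto simp: J_def finite_Inr_vim)
  have dLB: "distinct LB" using dI dJ by (auto simp: LB_def distinct_map)
  have sLB: "set LB = B" using B_split[of B] sI sJ by (simp add: LB_def comp_def)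
  define F where "F zs = connv mu eta delta eps g (take (length I) zs) (drop (length I) zs) * prod_list (map2 (Ufun \<alpha> \<beta>) LB zs)" for zs
  have summ: "connv mu eta delta eps g (map (\<lambda>i. \<psi> (Inl i)) I) (map (\<lambda>j. \<psi> (Inr j)) J) * (\<Prod>x\<in>B. Ufun \<alpha> \<beta> x (\<psi> x))
      = F (map \<psi> LB)" for \<psi>
    using dLB sLB by (simp add: F_def LB_def map2_same prod.distinct_set_conv_list[symmetric] comp_def del: map_append) (simp add: LB_def comp_def)
  have "(\<Sum>\<psi>\<in>PiE B (\<lambda>_. UNIV). connv mu eta delta eps g (map (\<lambda>i. \<psi> (Inl i)) I) (map (\<lambda>j. \<psi> (Inr j)) J) * (\<Prod>x\<in>B. Ufun \<alpha> \<beta> x (\<psi> x)))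
     = (\<Sum>\<psi>\<in>PiE (set LB) (\<lambda>_. UNIV). F (map \<psi> LB))"
    by (simp add: summ sLB)
  also have "\<dots> = (\<Sum>zs\<in>{zs. length zs = length I + length J}. F zs)"
    using sum_PiE_list[OF dLB, of F] by (simp add: LB_def comp_def)
  also have "\<dots> = (\<Sum>xs\<in>{xs. length xs = length I}. \<Sum>ys\<in>{ys. length ys = length J}. F (xs @ ys))"
    by (rule sum_Ln_append)
  also have "\<dots> = (\<Sum>xs\<in>{xs. length xs = length I}. \<Sum>ys\<in>{ys. length ys = length J}.
      connv mu eta delta eps g xs ys * prod_list (map2 (\<lambda>i x. W (\<alpha> i) x) I xs) * prod_list (map2 (\<lambda>j y. Wc (\<beta> j) y) J ys))"
    by (rule sum.cong[OF refl], rule sum.cong[OF refl])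
       (simp add: F_def LB_def map2_map1 Ufun_def mult.assoc)
  also have "\<dots> = cval (g + sum_list (map \<alpha> I) + sum_list (map \<beta> J))"
    by (simp add: block_contr cval_def)
  also have "\<dots> = cval (g + (\<Sum>x\<in>B. case_sum \<alpha> \<beta> x))"
    using dI dJ sI sJ fin by (simp add: sum_list_distinct_conv_sum_set sum_case_split add.assoc)
  finally show ?thesis by (simp add: I_def J_def)
qed

definition "L0 n m = map Inl [0..<n] @ map Inr [0..<m]"

lemma set_L0: "set (L0 n m) = bnd n m"
  by (auto simp: L0_def bnd_def)

lemma distinct_L0: "distinct (L0 n m)"
  by (auto simp: L0_def distinct_map)

lemma length_L0: "length (L0 n m) = n + m"
  by (simp add: L0_def)

definition "Qc \<alpha> \<beta> n m K = (\<Sum>zs\<in>{zs. length zs = n + m}.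
    FA_coeff mu eta delta eps K (drop n zs) (take n zs) * prod_list (map2 (Ufun \<alpha> \<beta>) (L0 n m) zs))"

lemma arrow_contr:
  assumes arr: "is_arrow (n, m, P, C)"
  shows "Qc \<alpha> \<beta> n m (n, m, P, C) = (\<Prod>p\<in>P. cval (snd p + (\<Sum>x\<in>fst p. case_sum \<alpha> \<beta> x))) * (\<Prod>g\<in>#C. cval g)"
proof -
  have A: "finite P" "\<forall>(B, g) \<in> P. \<forall>(B', g') \<in> P. (B, g) \<noteq> (B', g') \<longrightarrow> B \<inter> B' = {}"
    "\<Union>(fst ` P) = bnd n m"
    using arr unfolding is_arrow_def by simp_all
  have finP: "finite P" and un: "\<Union>(fst ` P) = bnd n m" using A by auto
  have disj: "\<forall>p\<in>P. \<forall>q\<in>P. p \<noteq> q \<longrightarrow> fst p \<inter> fst q = {}"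
  proof (intro ballI impI)
    fix p q assume "p \<in> P" "q \<in> P" "p \<noteq> q"
    then show "fst p \<inter> fst q = {}" using A(2) by (cases p; cases q) fastforce
  qed
  have finb: "finite (bnd n m)" by (simp add: bnd_def)
  have finB: "\<forall>p\<in>P. finite (fst p)" using un finb by (metis Sup_upper finite_subset image_eqI)
  have Bsub: "fst p \<subseteq> bnd n m" if "p \<in> P" for p using un that by blast
  define U where "U = Ufun \<alpha> \<beta>"
  define G where "G p \<psi> = connv mu eta delta eps (snd p) (map (\<lambda>i. \<psi> (Inl i)) (sorted_list_of_set {i. Inl i \<in> fst p}))
            (map (\<lambda>j. \<psi> (Inr j)) (sorted_list_of_set {j. Inr j \<in> fst p})) * (\<Prod>x\<in>fst p. U x (\<psi> x))" for p \<psi>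
  define F where "F zs = FA_coeff mu eta delta eps (n, m, P, C) (drop n zs) (take n zs) * prod_list (map2 U (L0 n m) zs)" for zs
  have "Qc \<alpha> \<beta> n m (n, m, P, C) = (\<Sum>zs\<in>{zs. length zs = length (L0 n m)}. F zs)"
    by (simp add: Qc_def F_def U_def length_L0)
  also have "\<dots> = (\<Sum>\<psi>\<in>PiE (bnd n m) (\<lambda>_. UNIV). F (map \<psi> (L0 n m)))"
    using sum_PiE_list[OF distinct_L0, of F n m] by (simp add: set_L0)
  also have "\<dots> = (\<Sum>\<psi>\<in>PiE (bnd n m) (\<lambda>_. UNIV). (\<Prod>p\<in>P. G p \<psi>) * (\<Prod>g\<in>#C. cval g))"
  proof (rule sum.cong[OF refl])
    fix \<psi> :: "nat + nat \<Rightarrow> 'b"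
    have tk: "take n (map \<psi> (L0 n m)) = map (\<lambda>i. \<psi> (Inl i)) [0..<n]" by (simp add: L0_def)
    have dr: "drop n (map \<psi> (L0 n m)) = map (\<lambda>j. \<psi> (Inr j)) [0..<m]" by (simp add: L0_def)
    have pr: "prod_list (map2 U (L0 n m) (map \<psi> (L0 n m))) = (\<Prod>p\<in>P. \<Prod>x\<in>fst p. U x (\<psi> x))"
    proof -
      have "prod_list (map2 U (L0 n m) (map \<psi> (L0 n m))) = (\<Prod>x\<in>bnd n m. U x (\<psi> x))"
        by (simp add: map2_same prod.distinct_set_conv_list[OF distinct_L0, symmetric] set_L0)
      also have "\<dots> = (\<Prod>x\<in>\<Union>(fst ` P). U x (\<psi> x))" by (simp add: un)
      also have "\<dots> = (\<Prod>p\<in>P. \<Prod>x\<in>fst p. U x (\<psi> x))"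
        by (rule prod.UNION_disjoint[OF finP finB disj])
      finally show ?thesis .
    qed
    have cn: "connv mu eta delta eps g (map (\<lambda>i. map (\<lambda>i. \<psi> (Inl i)) [0..<n] ! i) (sorted_list_of_set {i. Inl i \<in> B}))
                (map (\<lambda>j. map (\<lambda>j. \<psi> (Inr j)) [0..<m] ! j) (sorted_list_of_set {j. Inr j \<in> B}))
            = connv mu eta delta eps g (map (\<lambda>i. \<psi> (Inl i)) (sorted_list_of_set {i. Inl i \<in> B}))
                (map (\<lambda>j. \<psi> (Inr j)) (sorted_list_of_set {j. Inr j \<in> B}))"
      if "(B, g) \<in> P" for B g
    proof -
      have fB: "finite B" using finB that by auto
      have "B \<subseteq> bnd n m" using Bsub[OF that] by simp
      then have "i < n" if "Inl i \<in> B" for i using that by (auto simp: bnd_def)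
      moreover have "j < m" if "Inr j \<in> B" for j using that \<open>B \<subseteq> bnd n m\<close> by (auto simp: bnd_def)
      ultimately show ?thesis using fB by (auto simp: finite_Inl_vim finite_Inr_vim intro!: arg_cong2[where f = "connv mu eta delta eps g"] map_cong)
    qed
    have "F (map \<psi> (L0 n m)) = (\<Prod>p\<in>P. connv mu eta delta eps (snd p) (map (\<lambda>i. \<psi> (Inl i)) (sorted_list_of_set {i. Inl i \<in> fst p}))
            (map (\<lambda>j. \<psi> (Inr j)) (sorted_list_of_set {j. Inr j \<in> fst p}))) * (\<Prod>g\<in>#C. cval g) * (\<Prod>p\<in>P. \<Prod>x\<in>fst p. U x (\<psi> x))"
      unfolding F_def tk dr pr
      by (simp add: connv_nil case_prod_unfold cn cong: prod.cong)
    also have "\<dots> = (\<Prod>p\<in>P. G p \<psi>) * (\<Prod>g\<in>#C. cval g)"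
      by (simp add: G_def prod.distrib mult_ac)
    finally show "F (map \<psi> (L0 n m)) = (\<Prod>p\<in>P. G p \<psi>) * (\<Prod>g\<in>#C. cval g)" .
  qed
  also have "\<dots> = (\<Sum>\<psi>\<in>PiE (\<Union>(fst ` P)) (\<lambda>_. UNIV). \<Prod>p\<in>P. G p \<psi>) * (\<Prod>g\<in>#C. cval g)"
    by (simp add: sum_distrib_right un)
  also have "\<dots> = (\<Prod>p\<in>P. \<Sum>\<psi>\<in>PiE (fst p) (\<lambda>_. UNIV). G p \<psi>) * (\<Prod>g\<in>#C. cval g)"
  proof -
    have loc: "\<forall>p\<in>P. \<forall>\<phi> \<phi>'. (\<forall>x\<in>fst p. \<phi> x = \<phi>' x) \<longrightarrow> G p \<phi> = G p \<phi>'"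
    proof (intro ballI allI impI)
      fix p and \<phi> \<phi>' :: "nat + nat \<Rightarrow> 'b" assume p: "p \<in> P" and ag: "\<forall>x\<in>fst p. \<phi> x = \<phi>' x"
      have fp: "finite (fst p)" using finB p by auto
      show "G p \<phi> = G p \<phi>'"
        unfolding G_def using ag fp
        by (auto simp: finite_Inl_vim finite_Inr_vim intro!: arg_cong2[where f = "(*)"] arg_cong2[where f = "connv mu eta delta eps (snd p)"] map_cong prod.cong)
    qed
    show ?thesis using sum_PiE_factor[OF finP finB disj loc] by simp
  qed
  also have "\<dots> = (\<Prod>p\<in>P. cval (snd p + (\<Sum>x\<in>fst p. case_sum \<alpha> \<beta> x))) * (\<Prod>g\<in>#C. cval g)"
    using finB by (simp add: G_def U_def block_sum)
  finally show ?thesis .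
qed

end


lemma tensor_closed: "tensor_list (map (\<lambda>k. E 0 k 0) ks) = (0, 0, {}, mset ks)"
  by (induction ks) (auto simp: tensor_list_def cunit_def E_def)

lemma sorted_rev_sl: "sorted_wrt (\<ge>) (rev (sorted_list_of_multiset (M :: nat multiset)))"
proof -
  obtain xs where "mset xs = M" using ex_mset by blast
  then show ?thesis by (auto simp: sorted_wrt_rev)
qed

lemma FA_closed: "FA_coeff mu eta delta eps (0, 0, {}, M) [] [] = (\<Prod>g\<in>#M. connv mu eta delta eps g [] [])"
  by simp

theorem proposition4:
  fixes mu delta :: "'b::finite \<Rightarrow> 'b \<Rightarrow> 'b \<Rightarrow> 'k::field"
    and eta eps :: "'b \<Rightarrow> 'k"
    and K L :: cob
  assumes "comm_frobenius mu eta delta eps"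
    and "card (UNIV :: 'b set) > 1"
    and "is_arrow K" and "is_arrow L"
    and "K \<noteq> L"
    and "FA_eq mu eta delta eps K L"
  shows "\<exists>ks ls. sorted_wrt (\<ge>) ks \<and> sorted_wrt (\<ge>) ls \<and> ks \<noteq> ls \<and>
           FA_eq mu eta delta eps (tensor_list (map (\<lambda>k. E 0 k 0) ks))
                                  (tensor_list (map (\<lambda>l. E 0 l 0) ls))"
proof -
  interpret frob mu delta eta eps by unfold_locales (rule assms(1))
  obtain n m P C where K: "K = (n, m, P, C)" by (cases K)
  obtain n' m' P' C' where L0: "L = (n', m', P', C')" by (cases L)
  have nn: "n' = n" "m' = m" using assms(6) by (simp_all add: FA_eq_def K L0)
  have L: "L = (n, m, P', C')" using L0 nn by simp
  have coef: "FA_coeff mu eta delta eps K ys xs = FA_coeff mu eta delta eps L ys xs"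
    if "length xs = n" "length ys = m" for xs ys
    using assms(6) that by (simp add: FA_eq_def K L)
  have arrK: "is_arrow (n, m, P, C)" using assms(3) K by simp
  have arrL: "is_arrow (n, m, P', C')" using assms(4) L by simp
  have arrfacts: "finite Q \<and> (\<forall>p\<in>Q. fst p \<noteq> {} \<and> finite (fst p))" if "is_arrow (n, m, Q, D)" for Q D
  proof -
    have fQ: "finite Q" and ne: "\<forall>(B, g)\<in>Q. B \<noteq> {}" and un: "\<Union>(fst ` Q) = bnd n m"
      using that by (simp_all add: is_arrow_def)
    have "finite (fst p)" if "p \<in> Q" for p
    proof (rule finite_subset)
      show "fst p \<subseteq> bnd n m" using un that by blast
      show "finite (bnd n m)" by (simp add: bnd_def)
    qed
    moreover have "fst p \<noteq> {}" if "p \<in> Q" for p using ne that by (cases p) auto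
    ultimately show ?thesis using fQ by blast
  qed
  have fP: "finite P" and fP': "finite P'" using arrfacts[OF arrK] arrfacts[OF arrL] by auto
  have ne: "\<forall>p\<in>P \<union> P'. fst p \<noteq> {} \<and> finite (fst p)" using arrfacts[OF arrK] arrfacts[OF arrL] by auto
  define N where "N = Suc (Max (snd ` (P \<union> P') \<union> set_mset (C + C')))"
  have Npos: "N > 0" by (simp add: N_def)
  have finS: "finite (snd ` (P \<union> P') \<union> set_mset (C + C'))" using fP fP' by simp
  have bs: "\<forall>p\<in>P \<union> P'. snd p < N"
    using finS unfolding N_def by (auto intro!: le_imp_less_Suc Max_ge)
  have bc: "\<forall>g\<in>#C + C'. g < N"
    using finS unfolding N_def by (auto intro!: le_imp_less_Suc Max_ge)
  define t where "t x = N * 2 ^ sum_encode x" for x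
  define \<alpha> where "\<alpha> i = t (Inl i)" for i
  define \<beta> where "\<beta> j = t (Inr j)" for j
  have cs: "case_sum \<alpha> \<beta> = t" by (rule ext, simp add: \<alpha>_def \<beta>_def split: sum.splits)
  define v where "v p = snd p + (\<Sum>x\<in>fst p. N * 2 ^ sum_encode x)" for p :: "(nat + nat) set \<times> nat"
  define TK where "TK = image_mset v (mset_set P) + C"
  define TL where "TL = image_mset v (mset_set P') + C'"
  have QK: "Qc \<alpha> \<beta> n m K = (\<Prod>g\<in>#TK. cval g)"
    using arrow_contr[OF arrK, of \<alpha> \<beta>]
    by (simp add: K TK_def cs t_def v_def prod_unfold_prod_mset multiset.map_comp o_def)
  have QL: "Qc \<alpha> \<beta> n m L = (\<Prod>g\<in>#TL. cval g)"
    using arrow_contr[OF arrL, of \<alpha> \<beta>]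
    by (simp add: L TL_def cs t_def v_def prod_unfold_prod_mset multiset.map_comp o_def)
  have Qeq: "Qc \<alpha> \<beta> n m K = Qc \<alpha> \<beta> n m L"
    unfolding Qc_def by (rule sum.cong[OF refl]) (simp add: coef)
  have TKL: "TK \<noteq> TL"
  proof
    assume "TK = TL"
    then have "P = P' \<and> C = C'"
      using comb_key[of N P P' C C'] Npos fP fP' ne bs bc by (simp add: TK_def TL_def v_def[abs_def])
    then show False using assms(5) K L by simp
  qed
  define ks where "ks = rev (sorted_list_of_multiset TK)"
  define ls where "ls = rev (sorted_list_of_multiset TL)"
  have mk: "mset ks = TK" and ml: "mset ls = TL" by (simp_all add: ks_def ls_def)
  have "ks \<noteq> ls" using mk ml TKL by auto
  moreover have "FA_eq mu eta delta eps (tensor_list (map (\<lambda>k. E 0 k 0) ks)) (tensor_list (map (\<lambda>l. E 0 l 0) ls))"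
    unfolding tensor_closed FA_eq_def
    using QK QL Qeq mk ml by (simp add: connv_nil)
  ultimately show ?thesis using sorted_rev_sl unfolding ks_def ls_def by blast
qed

end
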